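(* Let $k,t\ge2$ be coprime integers and suppose that $mk \leq t < (m+1)k$ for some integer $m \geq 2$. Let $1\le r\le t-k$ and let $1\le\bar r\le t$ be the representative of $rk^{-1}\pmod t$. If $\bar{r} \geq m + 1$, then \[ k\,\psi_{k/t}\left(\frac{r}{t}\right)> \psi_{1/t}\left(\frac{\bar{r}}{t}\right), \] where $\psi_c(y) \coloneqq \psi(y+c)-\psi(y)$ for $c,y>0$.
   Context: $\psi=\Gamma'/\Gamma$ is the digamma function. *)

theory Defs
  imports "HOL-Analysis.Analysis"
begin

definition psi_shift :: "real \<Rightarrow> real \<Rightarrow> real" where
  "psi_shift c y = Digamma (y + c) - Digamma y"

end

theory Submission
  imports Defs
begin

lemma psi_shift_sums:
  fixes c y :: real
  assumes "c > 0" "y > 0"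
  shows "(\<lambda>n. 1 / (y + real n) - 1 / (y + c + real n)) sums psi_shift c y"
proof -
  have s1: "(\<lambda>n. inverse (real (Suc n)) - inverse (y + real n)) sums (Digamma y + euler_mascheroni)"
    using summable_Digamma[of y] assms by (simp add: Digamma_def summable_sums)
  have s2: "(\<lambda>n. inverse (real (Suc n)) - inverse (y + c + real n)) sums (Digamma (y + c) + euler_mascheroni)"
    using summable_Digamma[of "y + c"] assms by (simp add: Digamma_def summable_sums)
  from sums_diff[OF s2 s1] show ?thesis
    by (simp add: psi_shift_def divide_inverse algebra_simps)
qed

lemma term_ineq:
  fixes A B K T :: real
  assumes "A > 0" "B > 0" "K \<ge> 1" "A < K * B" "T > 0"
  shows "T / B - T / (B + 1) < K * (T / A - T / (A + K))"
proof -
  have l: "T / B - T / (B + 1) = T / (B * (B + 1))" using assms by (simp add: field_simps)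
  have r: "K * (T / A - T / (A + K)) = K * K * T / (A * (A + K))" using assms by (simp add: field_simps)
  have "A * (A + K) < (K * B) * (K * B + K)"
    using assms by (intro mult_strict_mono add_strict_right_mono) auto
  hence p: "A * (A + K) < K * K * (B * (B + 1))" by (simp add: algebra_simps)
  have "T / (B * (B + 1)) = K * K * T / (K * K * (B * (B + 1)))" using assms by simp
  also have "\<dots> < K * K * T / (A * (A + K))"
    using assms p by (intro divide_strict_left_mono) auto
  finally show ?thesis using l r by simp
qed

theorem lemma5p5:
  fixes k t m r rbar :: nat
  assumes "k \<ge> 2" and "t \<ge> 2" and "coprime k t"
    and "m \<ge> 2" and "m * k \<le> t" and "t < (m + 1) * k"
    and "1 \<le> r" and "r \<le> t - k"
    and "1 \<le> rbar" and "rbar \<le> t" and "(rbar * k) mod t = r mod t"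
    and "rbar \<ge> m + 1"
  shows "real k * psi_shift (real k / real t) (real r / real t)
           > psi_shift (1 / real t) (real rbar / real t)"
proof -
  have "(m + 1) * k \<le> rbar * k" using assms(12) by (rule mult_right_mono) simp
  hence rlt: "r < k * rbar" using assms by (simp add: mult.commute)
  have tp: "real t > 0" using assms by simp
  have sL: "(\<lambda>n. real k * (1 / (real r / real t + real n) - 1 / (real r / real t + real k / real t + real n)))
      sums (real k * psi_shift (real k / real t) (real r / real t))"
    using assms by (intro sums_mult psi_shift_sums) auto
  have sR: "(\<lambda>n. 1 / (real rbar / real t + real n) - 1 / (real rbar / real t + 1 / real t + real n))
      sums psi_shift (1 / real t) (real rbar / real t)"
    using assms by (intro psi_shift_sums) auto
  have le: "1 / (real rbar / real t + real n) - 1 / (real rbar / real t + 1 / real t + real n)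
     < real k * (1 / (real r / real t + real n) - 1 / (real r / real t + real k / real t + real n))" for n
  proof -
    have e1: "1 / (real rbar / real t + real n) = real t / (real rbar + real n * real t)"
      using tp by (simp add: field_simps)
    have e2: "1 / (real rbar / real t + 1 / real t + real n) = real t / (real rbar + real n * real t + 1)"
      using tp by (simp add: field_simps)
    have e3: "1 / (real r / real t + real n) = real t / (real r + real n * real t)"
      using tp by (simp add: field_simps)
    have e4: "1 / (real r / real t + real k / real t + real n) = real t / (real r + real n * real t + real k)"
      using tp by (simp add: field_simps)
    have "real r < real k * real rbar" using rlt by (metis of_nat_less_iff of_nat_mult)
    moreover have "real n * real t \<le> real k * (real n * real t)"
      using mult_right_mono[of 1 "real k" "real n * real t"] assms by simp
    ultimately have "real r + real n * real t < real k * (real rbar + real n * real t)"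
      by (simp add: algebra_simps)
    moreover have "real r \<ge> 1" "real rbar \<ge> 1" "real k \<ge> 1" using assms(1,7,9) by simp_all
    moreover have "real n * real t \<ge> 0" by simp
    ultimately show ?thesis unfolding e1 e2 e3 e4 using tp
      by (intro term_ineq) linarith+
  qed
  have "0 < (\<Sum>n. real k * (1 / (real r / real t + real n) - 1 / (real r / real t + real k / real t + real n))
     - (1 / (real rbar / real t + real n) - 1 / (real rbar / real t + 1 / real t + real n)))"
    using le sums_summable[OF sums_diff[OF sL sR]] by (intro suminf_pos) auto
  also have "\<dots> = real k * psi_shift (real k / real t) (real r / real t) - psi_shift (1 / real t) (real rbar / real t)"
    using sums_diff[OF sL sR] by (simp add: sums_iff)
  finally show ?thesis by simp
qed

end
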